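(* Let $X$ be a connected open Riemann surface, $X^* = X\cup\{\infty\}$ its one-point compactification, and let $E \subseteq X$ be a closed subset. Then $E$ has the bounded exhaustion hull (BEH) property if and only if $X^* \setminus E$ is locally connected at $\infty$.
   Context: For a closed set $A\subseteq X$, a hole of $A$ is a relatively compact connected component of $X\setminus A$, and $h(A)$ denotes the union of all holes of $A$. A closed set $E\subseteq X$ has the BEH property if for every compact set $K\subseteq X$ the set $h(E\cup K)$ is relatively compact in $X$. *)

theory Defs
  imports "HOL-Complex_Analysis.Complex_Analysis"
begin

definition complex_chart :: "'a topology \<Rightarrow> 'a set \<Rightarrow> ('a \<Rightarrow> complex) \<Rightarrow> bool" where
  "complex_chart X U \<phi> \<longleftrightarrow> openin X U \<and> open (\<phi> ` U) \<and>
     homeomorphic_map (subtopology X U) (top_of_set (\<phi> ` U)) \<phi>"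

definition holomorphic_atlas :: "'a topology \<Rightarrow> ('a set \<times> ('a \<Rightarrow> complex)) set \<Rightarrow> bool" where
  "holomorphic_atlas X \<A> \<longleftrightarrow>
     (\<forall>(U,\<phi>)\<in>\<A>. complex_chart X U \<phi>) \<and>
     (\<Union>(U,\<phi>)\<in>\<A>. U) = topspace X \<and>
     (\<forall>(U,\<phi>)\<in>\<A>. \<forall>(V,\<psi>)\<in>\<A>. (\<psi> \<circ> inv_into U \<phi>) holomorphic_on (\<phi> ` (U \<inter> V)))"

definition riemann_surface :: "'a topology \<Rightarrow> bool" where
  "riemann_surface X \<longleftrightarrow> Hausdorff_space X \<and> second_countable X \<and> connected_space X \<and>
     topspace X \<noteq> {} \<and> (\<exists>\<A>. holomorphic_atlas X \<A>)"

definition open_riemann_surface :: "'a topology \<Rightarrow> bool" where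
  "open_riemann_surface X \<longleftrightarrow> riemann_surface X \<and> \<not> compact_space X"

section \<open>One-point compactification (None plays the role of the point at infinity)\<close>

definition opc_open :: "'a topology \<Rightarrow> 'a option set \<Rightarrow> bool" where
  "opc_open X U \<longleftrightarrow> U \<subseteq> insert None (Some ` topspace X) \<and> openin X (Some -` U) \<and>
     (None \<in> U \<longrightarrow> compactin X (topspace X - Some -` U))"

lemma istopology_opc_open: "istopology (opc_open X)"
  unfolding istopology_def
proof (intro conjI allI impI)
  fix S T assume S: "opc_open X S" and T: "opc_open X T"
  have "topspace X - Some -` (S \<inter> T) = (topspace X - Some -` S) \<union> (topspace X - Some -` T)"
    by auto
  then show "opc_open X (S \<inter> T)"
    using S T unfolding opc_open_def
    by (auto simp: compactin_Un)
next
  fix K assume K: "\<forall>S\<in>K. opc_open X S"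
  have sub: "\<Union>K \<subseteq> insert None (Some ` topspace X)"
    using K unfolding opc_open_def by blast
  have op: "openin X (Some -` \<Union>K)"
  proof -
    have "Some -` \<Union>K = (\<Union>S\<in>K. Some -` S)" by auto
    then show ?thesis using K unfolding opc_open_def by auto
  qed
  have cp: "compactin X (topspace X - Some -` \<Union>K)" if "None \<in> \<Union>K"
  proof -
    from that obtain S where "S \<in> K" "None \<in> S" by blast
    then have c: "compactin X (topspace X - Some -` S)" using K unfolding opc_open_def by blast
    have "closedin X (topspace X - Some -` \<Union>K)" using op by blast
    moreover have "topspace X - Some -` \<Union>K \<subseteq> topspace X - Some -` S" using \<open>S \<in> K\<close> by blast
    ultimately show ?thesis using c closed_compactin by blast
  qed
  show "opc_open X (\<Union>K)" unfolding opc_open_def using sub op cp by blast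
qed

definition one_point_compactification :: "'a topology \<Rightarrow> 'a option topology" where
  "one_point_compactification X = topology (opc_open X)"

lemma openin_one_point_compactification:
  "openin (one_point_compactification X) U = opc_open X U"
  unfolding one_point_compactification_def using istopology_opc_open
  by (simp add: topology_inverse'[OF istopology_opc_open])

definition holes :: "'a topology \<Rightarrow> 'a set \<Rightarrow> 'a set set" where
  "holes X A = {C \<in> connected_components_of (subtopology X (topspace X - A)).
                  compactin X (X closure_of C)}"

definition hull_h :: "'a topology \<Rightarrow> 'a set \<Rightarrow> 'a set" where
  "hull_h X A = \<Union>(holes X A)"

definition BEH :: "'a topology \<Rightarrow> 'a set \<Rightarrow> bool" where
  "BEH X E \<longleftrightarrow> closedin X E \<and>
     (\<forall>K. compactin X K \<longrightarrow> compactin X (X closure_of (hull_h X (E \<union> K))))"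

end

theory Submission
  imports Defs
begin

lemma lc_complex_open:
  assumes "open (S::complex set)"
  shows "locally_connected_space (top_of_set S)"
proof -
  have "locally_connected_space (euclidean::complex topology)"
    unfolding locally_connected_space
  proof (intro allI impI)
    fix V x assume "openin (euclidean::complex topology) V \<and> x \<in> V"
    then obtain e where "e > 0" "ball x e \<subseteq> V" using open_contains_ball by force
    then show "\<exists>U. openin euclidean U \<and> connectedin euclidean U \<and> x \<in> U \<and> U \<subseteq> V"
      by (intro exI[of _ "ball x e"]) auto
  qed
  then show ?thesis using locally_connected_space_open_subset assms by fastforce
qed

lemma rs_locally_connected:
  assumes "riemann_surface X"
  shows "locally_connected_space X"
  unfolding locally_connected_space
proof (intro allI impI)
  fix V x assume Vx: "openin X V \<and> x \<in> V"
  obtain A where A: "holomorphic_atlas X A" using assms unfolding riemann_surface_def by blast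
  have "x \<in> topspace X" using Vx openin_subset by blast
  have A1: "\<forall>(U,\<phi>)\<in>A. complex_chart X U \<phi>" and A2: "(\<Union>(U,\<phi>)\<in>A. U) = topspace X"
    using A unfolding holomorphic_atlas_def by blast+
  have "x \<in> (\<Union>(U,\<phi>)\<in>A. U)" using A2 \<open>x \<in> topspace X\<close> by simp
  then obtain p where p1: "p \<in> A" and p2: "x \<in> (\<lambda>(U,\<phi>). U) p" by (rule UN_E)
  have p: "p \<in> A" "x \<in> fst p" using p1 p2 by (simp_all add: case_prod_beta)
  define U where "U = fst p"
  define \<phi> where "\<phi> = snd p"
  have U: "x \<in> U" using p U_def by simp
  have ch: "complex_chart X U \<phi>" using A1 p unfolding U_def \<phi>_def by (auto simp: split_beta)
  then have oU: "openin X U" and hm: "homeomorphic_map (subtopology X U) (top_of_set (\<phi> ` U)) \<phi>"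
    and o: "open (\<phi> ` U)"
    unfolding complex_chart_def by auto
  have "subtopology X U homeomorphic_space top_of_set (\<phi> ` U)"
    using hm homeomorphic_space by blast
  then have lcU: "locally_connected_space (subtopology X U)"
    using homeomorphic_locally_connected_space lc_complex_open[OF o] by blast
  have oVU: "openin (subtopology X U) (V \<inter> U)"
    using Vx by (simp add: openin_subtopology_Int)
  have xVU: "x \<in> V \<inter> U" using Vx U by blast
  obtain W where W: "openin (subtopology X U) W" "connectedin (subtopology X U) W"
     "x \<in> W" "W \<subseteq> V \<inter> U"
    using lcU oVU xVU unfolding locally_connected_space by metis
  have "openin X W" using openin_trans_full[OF W(1) oU] .
  moreover have "connectedin X W" using W(2) connectedin_subtopology by blast
  ultimately show "\<exists>U. openin X U \<and> connectedin X U \<and> x \<in> U \<and> U \<subseteq> V"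
    using W by blast
qed

lemma Some_vimage_ins: "Some -` insert None (Some ` T) = T" by auto

lemma topspace_opc: "topspace (one_point_compactification X) = insert None (Some ` topspace X)"
proof -
  have "openin (one_point_compactification X) (insert None (Some ` topspace X))"
    unfolding openin_one_point_compactification opc_open_def by (auto simp: Some_vimage_ins)
  moreover have "openin (one_point_compactification X) S \<Longrightarrow> S \<subseteq> insert None (Some ` topspace X)" for S
    unfolding openin_one_point_compactification opc_open_def by auto
  ultimately show ?thesis by (metis openin_subset subset_antisym openin_topspace)
qed


lemma F1:
  assumes Z: "Z = subtopology (one_point_compactification X) (topspace (one_point_compactification X) - Some ` E)"
    and W: "openin Z W" "None \<in> W"
  obtains K where "compactin X K" "insert None (Some ` (topspace X - (E \<union> K))) \<subseteq> W"
proof -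
  obtain T where T: "opc_open X T" "W = T \<inter> (insert None (Some ` topspace X) - Some ` E)"
    using W unfolding Z openin_subtopology openin_one_point_compactification topspace_opc by blast
  have "None \<in> T" using T W by auto
  then have "compactin X (topspace X - Some -` T)" using T unfolding opc_open_def by blast
  moreover have "insert None (Some ` (topspace X - (E \<union> (topspace X - Some -` T)))) \<subseteq> W"
    using T \<open>None \<in> T\<close> by auto
  ultimately show ?thesis using that by blast
qed

lemma F2:
  assumes Z: "Z = subtopology (one_point_compactification X) (topspace (one_point_compactification X) - Some ` E)"
    and H: "Hausdorff_space X" and K: "compactin X K"
  shows "openin Z (insert None (Some ` (topspace X - (E \<union> K))))"
proof -
  have KX: "K \<subseteq> topspace X" using K compactin_subset_topspace by blast
  have "closedin X K" using H K compactin_imp_closedin by blast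
  then have o: "openin X (topspace X - K)" by blast
  have "opc_open X (insert None (Some ` (topspace X - K)))"
    unfolding opc_open_def Some_vimage_ins using o K KX by (auto simp: Diff_Diff_Int Int_absorb1)
  moreover have "insert None (Some ` (topspace X - (E \<union> K))) =
     insert None (Some ` (topspace X - K)) \<inter> (insert None (Some ` topspace X) - Some ` E)"
    by auto
  ultimately show ?thesis
    unfolding Z openin_subtopology openin_one_point_compactification topspace_opc by blast
qed

lemma F3:
  assumes Z: "Z = subtopology (one_point_compactification X) (topspace (one_point_compactification X) - Some ` E)"
    and S: "openin X S" "S \<inter> E = {}"
  shows "openin Z (Some ` S)"
proof -
  have SX: "S \<subseteq> topspace X" using S openin_subset by blast
  have "opc_open X (Some ` S)"
    unfolding opc_open_def using S SX by (auto simp: inj_vimage_image_eq)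
  moreover have "Some ` S = Some ` S \<inter> (insert None (Some ` topspace X) - Some ` E)"
    using SX S by auto
  ultimately show ?thesis
    unfolding Z openin_subtopology openin_one_point_compactification topspace_opc by blast
qed

lemma cont_Some: "continuous_map X (one_point_compactification X) Some"
  unfolding continuous_map_def topspace_opc openin_one_point_compactification opc_open_def
proof (intro conjI allI impI)
  fix U assume "U \<subseteq> insert None (Some ` topspace X) \<and> openin X (Some -` U) \<and> (None \<in> U \<longrightarrow> compactin X (topspace X - Some -` U))"
  then have "openin X (Some -` U)" by blast
  moreover have "{x \<in> topspace X. Some x \<in> U} = topspace X \<inter> Some -` U" by auto
  ultimately show "openin X {x \<in> topspace X. Some x \<in> U}" by auto
qed auto

lemma C1:
  assumes Z: "Z = subtopology (one_point_compactification X) (topspace (one_point_compactification X) - Some ` E)"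
    and H: "Hausdorff_space X" and C: "connectedin X C" "C \<inter> E = {}"
    and nc: "\<not> compactin X (X closure_of C)"
  shows "connectedin Z (insert None (Some ` C))"
proof -
  let ?Y = "one_point_compactification X"
  have CX: "C \<subseteq> topspace X" using C(1) by (rule connectedin_subset_topspace)
  have c1: "connectedin ?Y (Some ` C)"
    using connectedin_continuous_map_image[OF cont_Some C(1)] .
  have "None \<in> ?Y closure_of (Some ` C)"
    unfolding in_closure_of
  proof (intro conjI allI impI)
    show "None \<in> topspace ?Y" by (simp add: topspace_opc)
    fix T assume T: "None \<in> T \<and> openin ?Y T"
    then have K: "compactin X (topspace X - Some -` T)"
      unfolding openin_one_point_compactification opc_open_def by blast
    show "\<exists>y. y \<in> Some ` C \<and> y \<in> T"
    proof (rule ccontr)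
      assume "\<not> ?thesis"
      then have "C \<subseteq> topspace X - Some -` T" using CX by auto
      then have "X closure_of C \<subseteq> topspace X - Some -` T"
        using closure_of_minimal compactin_imp_closedin[OF H K] by metis
      then have "compactin X (X closure_of C)" using closed_compactin[OF K _ closedin_closure_of] by metis
      then show False using nc by simp
    qed
  qed
  moreover have "Some ` C \<subseteq> ?Y closure_of (Some ` C)"
    using closure_of_subset[OF connectedin_subset_topspace[OF c1]] .
  ultimately have "insert None (Some ` C) \<subseteq> ?Y closure_of (Some ` C)"
    by (rule insert_subsetI)
  then have "connectedin ?Y (insert None (Some ` C))"
    using connectedin_intermediate_closure_of[OF c1 subset_insertI] by metis
  moreover have "insert None (Some ` C) \<subseteq> topspace ?Y - Some ` E"
    unfolding topspace_opc using CX C(2) by blast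
  ultimately show ?thesis unfolding Z connectedin_subtopology by (rule conjI)
qed

theorem proposition3p1:
  fixes X :: "'a topology" and E :: "'a set"
  assumes "open_riemann_surface X"
    and "closedin X E"
  shows "BEH X E \<longleftrightarrow>
    locally_connected_at None
      (subtopology (one_point_compactification X)
         (topspace (one_point_compactification X) - Some ` E))"
proof -
  define Z where "Z = subtopology (one_point_compactification X)
         (topspace (one_point_compactification X) - Some ` E)"
  have rs: "riemann_surface X" using assms(1) unfolding open_riemann_surface_def by (rule conjunct1)
  then have H: "Hausdorff_space X" unfolding riemann_surface_def by (rule conjunct1)
  have LC: "locally_connected_space X" using rs_locally_connected[OF rs] .
  have EX: "E \<subseteq> topspace X" using assms(2) closedin_subset by blast
  have NZ: "None \<in> topspace Z" unfolding Z_def topspace_subtopology topspace_opc by blast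
  have lca: "locally_connected_at None Z \<longleftrightarrow>
    (\<forall>W. openin Z W \<and> None \<in> W \<longrightarrow> (\<exists>V. openin Z V \<and> connectedin Z V \<and> None \<in> V \<and> V \<subseteq> W))"
    (is "?l \<longleftrightarrow> ?r")
  proof
    assume l: ?l
    show ?r
    proof (intro allI impI)
      fix W assume W: "openin Z W \<and> None \<in> W"
      have "\<exists>U V. openin Z U \<and> (openin Z V \<and> connectedin Z V) \<and> None \<in> U \<and> U \<subseteq> V \<and> V \<subseteq> W"
        using spec[OF l[unfolded locally_connected_at_def neighbourhood_base_at_def], of W] W by (rule mp)
      then obtain U V where "openin Z U" "openin Z V \<and> connectedin Z V" "None \<in> U" "U \<subseteq> V" "V \<subseteq> W"
        by blast
      then show "\<exists>V. openin Z V \<and> connectedin Z V \<and> None \<in> V \<and> V \<subseteq> W" by blast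
    qed
  next
    assume r: ?r
    show ?l
      unfolding locally_connected_at_def neighbourhood_base_at_def
    proof (intro allI impI)
      fix W assume "openin Z W \<and> None \<in> W"
      then obtain V where "openin Z V" "connectedin Z V" "None \<in> V" "V \<subseteq> W"
        using r by blast
      then show "\<exists>U V. openin Z U \<and> (openin Z V \<and> connectedin Z V) \<and> None \<in> U \<and> U \<subseteq> V \<and> V \<subseteq> W"
        by blast
    qed
  qed
  show ?thesis
    unfolding Z_def[symmetric] lca
  proof
    assume beh: "BEH X E"
    show "\<forall>W. openin Z W \<and> None \<in> W \<longrightarrow> (\<exists>V. openin Z V \<and> connectedin Z V \<and> None \<in> V \<and> V \<subseteq> W)"
    proof (intro allI impI)
      fix W assume W: "openin Z W \<and> None \<in> W"
      then obtain K where K: "compactin X K" and KW: "insert None (Some ` (topspace X - (E \<union> K))) \<subseteq> W"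
        using F1[OF Z_def] by blast
      define L where "L = X closure_of (hull_h X (E \<union> K))"
      have L: "compactin X L" using beh K unfolding BEH_def L_def by blast
      define Om where "Om = topspace X - (E \<union> K)"
      have oO: "openin X Om" unfolding Om_def
        using assms(2) K H compactin_imp_closedin by blast
      define NH where "NH = {C \<in> connected_components_of (subtopology X Om). \<not> compactin X (X closure_of C)}"
      have NHsub: "\<Union>NH \<subseteq> Om"
        unfolding NH_def using connected_components_of_subset by fastforce
      have "\<And>C. C \<in> NH \<Longrightarrow> openin X C"
        unfolding NH_def using LC oO locally_connected_space_open_connected_components by blast
      then have NHo: "openin X (\<Union>NH)" by (rule openin_Union)
      define V where "V = insert None (Some ` \<Union>NH)"
      have cov: "topspace X - (E \<union> (K \<union> L)) \<subseteq> \<Union>NH"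
      proof
        fix y assume y: "y \<in> topspace X - (E \<union> (K \<union> L))"
        then have "y \<in> topspace (subtopology X Om)" unfolding Om_def by auto
        then have "y \<in> \<Union>(connected_components_of (subtopology X Om))"
          unfolding Union_connected_components_of .
        then obtain C where C2: "y \<in> C" and C1: "C \<in> connected_components_of (subtopology X Om)"
          by (rule UnionE)
        note C = C1 C2
        have "\<not> compactin X (X closure_of C)"
        proof
          assume "compactin X (X closure_of C)"
          then have "C \<in> holes X (E \<union> K)" unfolding holes_def Om_def[symmetric] using C by blast
          then have "y \<in> hull_h X (E \<union> K)" unfolding hull_h_def using C by blast
          moreover have "hull_h X (E \<union> K) \<subseteq> topspace X"
            unfolding hull_h_def holes_def
            using connected_components_of_subset by fastforce
          ultimately have "y \<in> L" unfolding L_def using closure_of_subset by blast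
          then show False using y by blast
        qed
        then show "y \<in> \<Union>NH" using C unfolding NH_def by blast
      qed
      have "V = Some ` \<Union>NH \<union> insert None (Some ` (topspace X - (E \<union> (K \<union> L))))"
        unfolding V_def using cov by blast
      moreover have "openin Z (Some ` \<Union>NH)"
        using F3[OF Z_def NHo] NHsub unfolding Om_def by blast
      moreover have "openin Z (insert None (Some ` (topspace X - (E \<union> (K \<union> L)))))"
        using F2[OF Z_def H] K L compactin_Un by blast
      ultimately have oV: "openin Z V" using openin_Un by metis
      define U where "U = insert {None} ((\<lambda>C. insert None (Some ` C)) ` NH)"
      have "V = \<Union>U" unfolding U_def V_def by blast
      moreover have "connectedin Z (\<Union>U)"
      proof (rule connectedin_Union)
        show "\<Inter> U \<noteq> {}" unfolding U_def by blast
        fix S assume "S \<in> U"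
        then consider "S = {None}" | C where "C \<in> NH" "S = insert None (Some ` C)"
          unfolding U_def by blast
        then show "connectedin Z S"
        proof cases
          case 1 then show ?thesis using NZ by simp
        next
          case 2
          then have "connectedin (subtopology X Om) C" "\<not> compactin X (X closure_of C)"
             "C \<subseteq> Om"
            unfolding NH_def using connectedin_connected_components_of
              connected_components_of_subset by fastforce+
          then show ?thesis using C1[OF Z_def H, of C] 2 connectedin_subtopology
            unfolding Om_def by blast
        qed
      qed
      ultimately have cV: "connectedin Z V" by simp
      have sV: "V \<subseteq> W" using KW NHsub unfolding V_def Om_def by blast
      have nV: "None \<in> V" unfolding V_def by simp
      show "\<exists>V. openin Z V \<and> connectedin Z V \<and> None \<in> V \<and> V \<subseteq> W"
        by (intro exI[of _ V] conjI oV cV nV sV)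
    qed
  next
    assume R: "\<forall>W. openin Z W \<and> None \<in> W \<longrightarrow> (\<exists>V. openin Z V \<and> connectedin Z V \<and> None \<in> V \<and> V \<subseteq> W)"
    show "BEH X E"
      unfolding BEH_def
    proof (intro conjI allI impI)
      show "closedin X E" by fact
      fix K assume K: "compactin X K"
      define Om where "Om = topspace X - (E \<union> K)"
      have oO: "openin X Om" unfolding Om_def
        using assms(2) K H compactin_imp_closedin by blast
      obtain V where V: "openin Z V" "connectedin Z V" "None \<in> V" "V \<subseteq> insert None (Some ` Om)"
        using R F2[OF Z_def H K] unfolding Om_def by blast
      then obtain K' where K': "compactin X K'" "insert None (Some ` (topspace X - (E \<union> K'))) \<subseteq> V"
        using F1[OF Z_def] by blast
      have hsub: "hull_h X (E \<union> K) \<subseteq> K'"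
      proof
        fix y assume "y \<in> hull_h X (E \<union> K)"
        then obtain C where C: "C \<in> connected_components_of (subtopology X Om)" "y \<in> C"
           "compactin X (X closure_of C)"
          unfolding hull_h_def holes_def Om_def by blast
        have CO: "C \<subseteq> Om" using C connected_components_of_subset by fastforce
        show "y \<in> K'"
        proof (rule ccontr)
          assume "y \<notin> K'"
          then have yV: "Some y \<in> V" using K' CO C unfolding Om_def by blast
          define P where "P = Some ` C"
          define Q where "Q = Some ` \<Union>(connected_components_of (subtopology X Om) - {C})
               \<union> insert None (Some ` (topspace X - (E \<union> X closure_of C)))"
          have "openin X C"
            using LC oO C locally_connected_space_open_connected_components by blast
          then have oP: "openin Z P" unfolding P_def using F3[OF Z_def] CO Om_def by blast
          have "\<And>D. D \<in> connected_components_of (subtopology X Om) - {C} \<Longrightarrow> openin X D"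
            using LC oO locally_connected_space_open_connected_components by blast
          then have "openin X (\<Union>(connected_components_of (subtopology X Om) - {C}))"
            by (rule openin_Union)
          moreover have "\<Union>(connected_components_of (subtopology X Om) - {C}) \<inter> E = {}"
            using connected_components_of_subset unfolding Om_def by fastforce
          ultimately have "openin Z (Some ` \<Union>(connected_components_of (subtopology X Om) - {C}))"
            using F3[OF Z_def] by blast
          then have oQ: "openin Z Q" unfolding Q_def using F2[OF Z_def H C(3)] by blast
          have disj: "\<Union>(connected_components_of (subtopology X Om) - {C}) \<inter> C = {}"
            using connected_components_of_disjoint[OF C(1)] by (auto simp: disjnt_def)
          have "C \<subseteq> topspace X" using CO unfolding Om_def by blast
          then have "C \<subseteq> X closure_of C" by (rule closure_of_subset)
          then have PQ: "P \<inter> Q = {}" unfolding P_def Q_def using disj by blast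
          have OmX: "Om \<subseteq> topspace X" unfolding Om_def by blast
          have Omcov: "Om \<subseteq> \<Union>(connected_components_of (subtopology X Om))"
            unfolding Union_connected_components_of topspace_subtopology using OmX by blast
          have "V \<subseteq> P \<union> Q"
          proof
            fix v assume "v \<in> V"
            then have "v \<in> insert None (Some ` Om)" using V(4) by blast
            then consider "v = None" | z where "z \<in> Om" "v = Some z" by blast
            then show "v \<in> P \<union> Q"
            proof cases
              case 1 then show ?thesis unfolding Q_def by blast
            next
              case 2
              then obtain D where D: "z \<in> D" "D \<in> connected_components_of (subtopology X Om)"
                using Omcov by blast
              show ?thesis
              proof (cases "D = C")
                case True then show ?thesis unfolding P_def using 2 D by blast
              next
                case False
                then have "z \<in> \<Union>(connected_components_of (subtopology X Om) - {C})" using D by blast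
                then show ?thesis unfolding Q_def using 2 by blast
              qed
            qed
          qed
          moreover have "P \<inter> V \<noteq> {}" using yV C unfolding P_def by blast
          moreover have "Q \<inter> V \<noteq> {}" using V(3) unfolding Q_def by blast
          ultimately show False using V(2) oP oQ PQ unfolding connectedin by blast
        qed
      qed
      have "closedin X K'" using K' H compactin_imp_closedin by blast
      then have "X closure_of hull_h X (E \<union> K) \<subseteq> K'" using hsub closure_of_minimal by blast
      then show "compactin X (X closure_of hull_h X (E \<union> K))"
        using closed_compactin[OF K'(1) _ closedin_closure_of] by blast
    qed
  qed
qed

end
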